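(* Let $H_A,H_B$ be finite-dimensional Hilbert spaces and let $\Phi:B(H_A)\to B(H_B)$ be a positive, trace-preserving linear map whose adjoint $\Phi^*:B(H_B)\to B(H_A)$ (with respect to the Hilbert–Schmidt inner product) satisfies the Schwarz-type inequality $$\Phi^{*}(\rho^{*})\,\Phi^{*}(\sigma)^{-1}\,\Phi^{*}(\rho)\le \Phi^{*}(\rho^{*}\sigma^{-1}\rho)$$ for every $\rho\in B(H_B)$ and every positive definite $\sigma\in B(H_B)$ (with $\Phi^*(\sigma)$ invertible). Let $X\in B(H_A)$ be positive definite with $\Phi(X)$ invertible, and let $\omega\in B(H_B)$ be positive definite. Define $$\tau=X^{1/2}\,\Phi^{*}\!\big(\Phi(X)^{-1/2}\,\omega\, \Phi(X)^{-1/2}\big)\,X^{1/2}\in B(H_A),$$ and assume $\tau$ is invertible. Define the linear map $V:B(H_B)\to B(H_A)$ by $V(\rho)=\Phi^{*}\big(\rho\,\Phi(X)^{-1/2}\big)X^{1/2}$. Then for every positive semidefinite $Y\in B(H_A)$, $$V^{*}\,\Delta(Y,\tau)\,V\le \Delta(\Phi(Y),\omega)$$ as operators on the Hilbert space $B(H_B)$ equipped with the inner product $\langle A,B\rangle=\operatorname{tr}(A^*B)$.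
   Context: For a positive semidefinite operator $\rho$ and a positive definite operator $\sigma$ on a finite-dimensional Hilbert space $H$, the relative modular operator $\Delta(\rho,\sigma)$ is the linear map on $B(H)$ given by $\Delta(\rho,\sigma)(Z)=\rho Z\sigma^{-1}$ (left multiplication by $\rho$ composed with right multiplication by $\sigma^{-1}$); it is a positive operator on $B(H)$ with the Hilbert–Schmidt inner product $\langle A,B\rangle=\operatorname{tr}(A^*B)$. $V^*$ denotes the adjoint of $V$ with respect to the Hilbert–Schmidt inner products. *)

theory Defs
  imports "HOL-Analysis.Analysis" "HOL-Library.Complex_Order"
begin

text \<open>Operators on the finite-dimensional Hilbert space complex^'n are represented by
  matrices complex^'n^'n (B(H)); the order on complex numbers is the standard partial order
  (0 \<le> z iff z is real and nonnegative), from HOL-Library.Complex_Order.\<close>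

type_synonym 'n cmat = "complex^'n^'n"

definition cinner :: "complex^('n::finite) \<Rightarrow> complex^'n \<Rightarrow> complex" where
  "cinner x y = (\<Sum>i\<in>UNIV. cnj (x$i) * y$i)"

definition madj :: "('n::finite) cmat \<Rightarrow> ('n::finite) cmat" where
  "madj A = (\<chi> i j. cnj (A$j$i))"

definition cmscale :: "complex \<Rightarrow> ('n::finite) cmat \<Rightarrow> ('n::finite) cmat" where
  "cmscale c A = (\<chi> i j. c * A$i$j)"

definition psd :: "('n::finite) cmat \<Rightarrow> bool" where
  "psd A \<longleftrightarrow> (\<forall>x. 0 \<le> cinner x (A *v x))"

definition pd :: "('n::finite) cmat \<Rightarrow> bool" where
  "pd A \<longleftrightarrow> (\<forall>x. x \<noteq> 0 \<longrightarrow> 0 < cinner x (A *v x))"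

definition loewner_le :: "('n::finite) cmat \<Rightarrow> ('n::finite) cmat \<Rightarrow> bool" where
  "loewner_le A B \<longleftrightarrow> psd (B - A)"

definition msqrt :: "('n::finite) cmat \<Rightarrow> ('n::finite) cmat" where
  "msqrt A = (THE B. psd B \<and> B ** B = A)"

definition minvsqrt :: "('n::finite) cmat \<Rightarrow> ('n::finite) cmat" where
  "minvsqrt A = matrix_inv (msqrt A)"

definition hs :: "('n::finite) cmat \<Rightarrow> ('n::finite) cmat \<Rightarrow> complex" where
  "hs A B = trace (madj A ** B)"

definition clinear_map :: "(('a::finite) cmat \<Rightarrow> ('b::finite) cmat) \<Rightarrow> bool" where
  "clinear_map T \<longleftrightarrow> (\<forall>A B. T (A + B) = T A + T B) \<and> (\<forall>c A. T (cmscale c A) = cmscale c (T A))"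

definition positive_map :: "(('a::finite) cmat \<Rightarrow> ('b::finite) cmat) \<Rightarrow> bool" where
  "positive_map T \<longleftrightarrow> (\<forall>A. psd A \<longrightarrow> psd (T A))"

definition trace_preserving :: "(('a::finite) cmat \<Rightarrow> ('b::finite) cmat) \<Rightarrow> bool" where
  "trace_preserving T \<longleftrightarrow> (\<forall>A. trace (T A) = trace A)"

definition hs_adjoint :: "(('a::finite) cmat \<Rightarrow> ('b::finite) cmat) \<Rightarrow> (('b::finite) cmat \<Rightarrow> ('a::finite) cmat)" where
  "hs_adjoint T = (THE S. \<forall>A B. hs (S B) A = hs B (T A))"

definition rel_modular :: "('n::finite) cmat \<Rightarrow> ('n::finite) cmat \<Rightarrow> ('n::finite) cmat \<Rightarrow> ('n::finite) cmat" where
  "rel_modular \<rho> \<sigma> Z = \<rho> ** Z ** matrix_inv \<sigma>"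

definition op_le :: "(('n::finite) cmat \<Rightarrow> ('n::finite) cmat) \<Rightarrow> (('n::finite) cmat \<Rightarrow> ('n::finite) cmat) \<Rightarrow> bool" where
  "op_le L M \<longleftrightarrow> (\<forall>Z. 0 \<le> hs Z (M Z - L Z))"

end

theory Submission
  imports Defs
begin



lemma madj_madj[simp]: "madj (madj A) = A" by (simp add: madj_def vec_eq_iff)
lemma madj_mult: "madj (A ** B) = madj B ** madj A"
  by (simp add: madj_def matrix_matrix_mult_def vec_eq_iff mult.commute)
lemma madj_add: "madj (A + B) = madj A + madj B"
  by (simp add: madj_def vec_eq_iff)
lemma madj_diff: "madj (A - B) = madj A - madj B"
  by (simp add: madj_def vec_eq_iff)
lemma madj_mat1[simp]: "madj (mat 1) = mat 1"
  by (simp add: madj_def vec_eq_iff mat_def)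

lemma cinner_madj: "cinner x (A *v y) = cinner (madj A *v x) y"
  apply (simp add: cinner_def matrix_vector_mult_def madj_def sum_distrib_left sum_distrib_right)
  apply (subst sum.swap) apply (simp add: mult_ac)
  done

lemma cinner_cnj: "cnj (cinner x y) = cinner y x"
  by (simp add: cinner_def mult.commute)




lemma cinner_add_right: "cinner x (y + z) = cinner x y + cinner x z"
  by (simp add: cinner_def distrib_left sum.distrib)
lemma cinner_add_left: "cinner (x + y) z = cinner x z + cinner y z"
  by (simp add: cinner_def distrib_right sum.distrib)
lemma cinner_diff_right: "cinner x (y - z) = cinner x y - cinner x z"
  by (simp add: cinner_def right_diff_distrib sum_subtractf)
lemma cinner_diff_left: "cinner (x - y) z = cinner x z - cinner y z"
  by (simp add: cinner_def left_diff_distrib sum_subtractf)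
lemma cinner_scale_right: "cinner x (c *s y) = c * cinner x y"
  by (simp add: cinner_def sum_distrib_left mult_ac)
lemma cinner_scale_left: "cinner (c *s x) y = cnj c * cinner x y"
  by (simp add: cinner_def sum_distrib_left mult_ac)
lemma vec_scaleR_c: "((r::real) *\<^sub>R (y::complex^'n))$i = of_real r * y$i"
  by (subst vector_scaleR_component) (simp add: scaleR_conv_of_real)

lemma cinner_scaleR_right: "cinner x (r *\<^sub>R y) = of_real r * cinner x y"
  unfolding cinner_def sum_distrib_left by (rule sum.cong) (auto simp del: vector_scaleR_component simp add: vec_scaleR_c)
lemma cinner_scaleR_left: "cinner (r *\<^sub>R x) y = of_real r * cinner x y"
  unfolding cinner_def sum_distrib_left by (rule sum.cong) (auto simp del: vector_scaleR_component simp add: vec_scaleR_c)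
lemma cinner_zero_left[simp]: "cinner 0 y = 0" by (simp add: cinner_def)
lemma cinner_zero_right[simp]: "cinner y 0 = 0" by (simp add: cinner_def)
lemma cinner_sum_right: "cinner x (sum f S) = (\<Sum>s\<in>S. cinner x (f s))"
  by (induction S rule: infinite_finite_induct) (auto simp: cinner_add_right)
lemma cinner_sum_left: "cinner (sum f S) y = (\<Sum>s\<in>S. cinner (f s) y)"
  by (induction S rule: infinite_finite_induct) (auto simp: cinner_add_left)

lemma cnj_mult_self: "cnj a * a = of_real ((norm a)^2)"
  by (metis complex_norm_square mult.commute)

lemma cinner_self: "cinner x x = of_real ((norm x)^2)"
proof -
  have "cinner x x = (\<Sum>i\<in>UNIV. of_real ((norm (x$i))^2))"
    unfolding cinner_def by (rule sum.cong) (auto simp: cnj_mult_self)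
  also have "\<dots> = of_real (\<Sum>i\<in>UNIV. (norm (x$i))^2)" by simp
  also have "(\<Sum>i\<in>UNIV. (norm (x$i))^2) = (norm x)^2"
    unfolding norm_vec_def L2_set_def by (simp add: sum_nonneg)
  finally show ?thesis .
qed

lemma cinner_self_eq_0[simp]: "cinner x x = 0 \<longleftrightarrow> x = 0"
  by (simp add: cinner_self)

lemma inner_Re_cinner: "inner x y = Re (cinner x y)"
  by (simp add: inner_vec_def cinner_def inner_complex_def Re_sum)

lemma mv_scale: "(A::complex^'n^'m) *v (c *s x) = c *s (A *v x)"
  by (auto simp: matrix_vector_mult_def vec_eq_iff sum_distrib_left mult_ac intro!: sum.cong)
lemma mv_add: "(A::complex^'n^'m) *v (x + y) = A *v x + A *v y"
  by (simp add: matrix_vector_right_distrib)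
lemma mv_sum: "(A::complex^'n^'m) *v (sum f S) = (\<Sum>s\<in>S. A *v f s)"
  by (induction S rule: infinite_finite_induct) (auto simp: mv_add)




definition E :: "'n::finite \<Rightarrow> 'n \<Rightarrow> 'n cmat" where
  "E k l = (\<chi> a b. if a = k \<and> b = l then 1 else 0)"

lemma hs_expand: "hs C A = (\<Sum>k\<in>UNIV. \<Sum>l\<in>UNIV. cnj (C$k$l) * A$k$l)"
  unfolding hs_def trace_def madj_def matrix_matrix_mult_def
  by (simp, subst sum.swap, simp)

lemma sum_delta2:
  fixes k :: "'a::finite" and l :: "'b::finite" and f :: "'a \<Rightarrow> 'b \<Rightarrow> 'c::comm_monoid_add"
  shows "(\<Sum>a\<in>UNIV. \<Sum>b\<in>UNIV. if a = k \<and> b = l then f a b else 0) = f k l"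
proof -
  have "(\<Sum>a\<in>UNIV. \<Sum>b\<in>UNIV. if a = k \<and> b = l then f a b else 0) = 
     (\<Sum>a\<in>(UNIV::'a set). if a = k then (\<Sum>b\<in>(UNIV::'b set). if b = l then f a b else 0) else 0)"
    by (rule sum.cong) auto
  then show ?thesis by simp
qed

lemma sum_delta2':
  fixes k :: "'a::finite" and l :: "'b::finite" and f :: "'a \<Rightarrow> 'b \<Rightarrow> 'c::comm_monoid_add"
  shows "(\<Sum>a\<in>UNIV. \<Sum>b\<in>UNIV. if k = a \<and> l = b then f a b else 0) = f k l"
  using sum_delta2[of k l f] by (simp add: eq_commute)

lemma hs_E: "hs C (E k l) = cnj (C$k$l)"
  unfolding hs_expand E_def by (simp add: if_distrib sum_delta2 cong: if_cong)

lemma mat_as_sum: "A = (\<Sum>k\<in>UNIV. \<Sum>l\<in>UNIV. cmscale (A$k$l) (E k l))"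
  by (simp add: vec_eq_iff cmscale_def E_def if_distrib sum_delta2' cong: if_cong)

lemma hs_cnj: "hs A B = cnj (hs B A)"
  unfolding hs_expand by (simp add: mult.commute)
lemma hs_add_right: "hs A (B + C) = hs A B + hs A C"
  unfolding hs_expand by (simp add: distrib_left sum.distrib)
lemma hs_diff_right: "hs A (B - C) = hs A B - hs A C"
  unfolding hs_expand by (simp add: right_diff_distrib sum_subtractf)
lemma hs_scale_right: "hs A (cmscale c B) = c * hs A B"
  unfolding hs_expand by (simp add: cmscale_def sum_distrib_left mult_ac)
lemma hs_add_left: "hs (A + B) C = hs A C + hs B C"
  unfolding hs_expand by (simp add: distrib_right sum.distrib)
lemma hs_scale_left: "hs (cmscale c B) A = cnj c * hs B A"
  unfolding hs_expand by (simp add: cmscale_def sum_distrib_left mult_ac)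
lemma hs_zero_right[simp]: "hs A 0 = 0"
  unfolding hs_expand by simp
lemma hs_sum_right: "hs A (sum f S) = (\<Sum>s\<in>S. hs A (f s))"
  by (induction S rule: infinite_finite_induct) (auto simp: hs_add_right)

lemma hs_ext: assumes "\<And>A. hs C A = hs C' A" shows "C = C'"
proof -
  have "cnj (C$k$l) = cnj (C'$k$l)" for k l using assms[of "E k l"] by (simp add: hs_E)
  then show ?thesis by (simp add: vec_eq_iff)
qed

lemma clinear_zero: "clinear_map T \<Longrightarrow> T 0 = 0"
  unfolding clinear_map_def by (metis add_cancel_right_right add_0)
lemma clinear_add: "clinear_map T \<Longrightarrow> T (A + B) = T A + T B"
  unfolding clinear_map_def by blast
lemma clinear_scale: "clinear_map T \<Longrightarrow> T (cmscale c A) = cmscale c (T A)"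
  unfolding clinear_map_def by blast
lemma clinear_sum: "clinear_map T \<Longrightarrow> T (sum f S) = (\<Sum>s\<in>S. T (f s))"
  by (induction S rule: infinite_finite_induct) (auto simp: clinear_add clinear_zero)
lemma clinear_diff: "clinear_map T \<Longrightarrow> T (A - B) = T A - T B"
  by (metis add_diff_cancel clinear_add diff_add_cancel)

lemma hs_adjoint_ex:
  assumes "clinear_map T"
  shows "\<exists>!S. \<forall>A B. hs (S B) A = hs B (T A)"
proof
  define S where "S B = (\<chi> k l. cnj (hs B (T (E k l))))" for B
  show "\<forall>A B. hs (S B) A = hs B (T A)"
  proof (intro allI)
    fix A B
    have "hs B (T A) = hs B (\<Sum>k\<in>UNIV. \<Sum>l\<in>UNIV. T (cmscale (A$k$l) (E k l)))"
      by (subst mat_as_sum, simp add: clinear_sum[OF assms])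
    also have "\<dots> = (\<Sum>k\<in>UNIV. \<Sum>l\<in>UNIV. A$k$l * hs B (T (E k l)))"
      by (simp add: hs_sum_right clinear_scale[OF assms] hs_scale_right)
    also have "\<dots> = hs (S B) A"
      unfolding hs_expand S_def by (simp add: mult.commute)
    finally show "hs (S B) A = hs B (T A)" by simp
  qed
next
  fix S' assume "\<forall>A B. hs (S' B) A = hs B (T A)"
  then show "S' = (\<lambda>B. \<chi> k l. cnj (hs B (T (E k l))))"
  proof (intro ext)
    fix B
    show "S' B = (\<chi> k l. cnj (hs B (T (E k l))))"
      unfolding vec_eq_iff
    proof (intro allI)
      fix k l
      have "S' B $ k $ l = cnj (hs (S' B) (E k l))" by (simp add: hs_E)
      also have "\<dots> = cnj (hs B (T (E k l)))" using \<open>\<forall>A B. hs (S' B) A = hs B (T A)\<close> by simp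
      finally show "S' B $ k $ l = (\<chi> k l. cnj (hs B (T (E k l)))) $ k $ l" by simp
    qed
  qed
qed

lemma hs_adjoint: "clinear_map T \<Longrightarrow> hs (hs_adjoint T B) A = hs B (T A)"
  unfolding hs_adjoint_def using theI'[OF hs_adjoint_ex] by blast

lemma hs_adjoint_linear:
  assumes "clinear_map T" shows "clinear_map (hs_adjoint T)"
  unfolding clinear_map_def
proof (intro conjI allI)
  fix A B
  show "hs_adjoint T (A + B) = hs_adjoint T A + hs_adjoint T B"
    by (rule hs_ext) (simp add: hs_adjoint[OF assms] hs_add_left)
next
  fix c A
  show "hs_adjoint T (cmscale c A) = cmscale c (hs_adjoint T A)"
    by (rule hs_ext) (simp add: hs_adjoint[OF assms] hs_scale_left)
qed





lemma complex_nonneg_iff: "0 \<le> (z::complex) \<longleftrightarrow> Im z = 0 \<and> 0 \<le> Re z"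
  by (auto simp: less_eq_complex_def)

lemma cinner_axis: "cinner (axis i 1) v = v$i"
proof -
  have "cinner (axis i 1) v = (\<Sum>j\<in>UNIV. if j = i then v$j else 0)"
    unfolding cinner_def axis_def by (rule sum.cong) auto
  then show ?thesis by simp
qed

lemma madj_cmscale: "madj (cmscale c A) = cmscale (cnj c) (madj A)"
  by (simp add: madj_def cmscale_def vec_eq_iff)
lemma cmscale_mv: "cmscale c A *v x = c *s (A *v x)"
  by (auto simp: cmscale_def matrix_vector_mult_def vec_eq_iff sum_distrib_left mult_ac intro!: sum.cong)

lemma hermitian_eqI:
  assumes "\<And>x y. cinner x (A *v y) = cinner x (B *v y)"
  shows "A = B"
proof -
  have "A *v y = B *v y" for y
    using assms[of "axis _ 1" y] by (simp add: cinner_axis vec_eq_iff)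
  then show ?thesis by (simp add: matrix_eq)
qed

lemma psd_hermitian:
  assumes "psd A" shows "madj A = A"
proof -
  have re: "Im (cinner x (A *v x)) = 0" for x
    using assms unfolding psd_def by (simp add: complex_nonneg_iff)
  have key: "cinner x (A *v y) = cnj (cinner y (A *v x))" for x y
  proof -
    let ?a = "cinner x (A *v y)" and ?b = "cinner y (A *v x)"
    have e1: "cinner (x + y) (A *v (x + y)) = cinner x (A *v x) + (?a + ?b) + cinner y (A *v y)"
      by (simp only: mv_add cinner_add_left cinner_add_right) (simp add: algebra_simps)
    have "Im (cinner (x + y) (A *v (x + y))) = 0" by (rule re)
    then have 1: "Im (?a + ?b) = 0" unfolding e1 using re[of x] re[of y] by simp
    have e: "cinner (x + \<i> *s y) (A *v (x + \<i> *s y)) = cinner x (A *v x) + (\<i> * ?a - \<i> * ?b) + cinner y (A *v y)"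
      by (simp only: mv_add mv_scale cinner_add_left cinner_add_right cinner_scale_left cinner_scale_right)
         (simp add: algebra_simps)
    have "Im (cinner (x + \<i> *s y) (A *v (x + \<i> *s y))) = 0" by (rule re)
    then have "Im (\<i> * ?a - \<i> * ?b) = 0" unfolding e using re[of x] re[of y] by simp
    then have 2: "Re ?a = Re ?b" by simp
    from 1 2 show ?thesis by (simp add: complex_eq_iff)
  qed
  show ?thesis
  proof (rule hermitian_eqI)
    fix x y
    have "cinner x (madj A *v y) = cinner (A *v x) y" using cinner_madj[of x "madj A" y] by (simp only: madj_madj)
    also have "\<dots> = cnj (cinner y (A *v x))" by (rule cinner_cnj[symmetric])
    finally show "cinner x (madj A *v y) = cinner x (A *v y)" using key[of x y] by simp
  qed
qed

lemma hermitian_real: assumes "madj A = A" shows "Im (cinner x (A *v x)) = 0"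
proof -
  have "cnj (cinner x (A *v x)) = cinner (A *v x) x" by (rule cinner_cnj)
  also have "\<dots> = cinner x (madj A *v x)" using cinner_madj[of x "madj A" x] by (simp only: madj_madj)
  finally have "cnj (cinner x (A *v x)) = cinner x (A *v x)" using assms by simp
  then show ?thesis by (simp add: complex_eq_iff)
qed

lemma pd_psd: "pd A \<Longrightarrow> psd A"
  unfolding pd_def psd_def
proof (intro allI)
  fix x assume "\<forall>x. x \<noteq> 0 \<longrightarrow> 0 < cinner x (A *v x)"
  then show "0 \<le> cinner x (A *v x)" by (cases "x = 0") (auto intro: less_imp_le)
qed

lemma inj_invertible: "inj ((*v) (A::complex^'n^'n)) \<Longrightarrow> invertible A"
  using det_nz_iff_inj_gen[of "(*v) A"] matrix_vector_mul_linear_gen[of A]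
    invertible_det_nz[of A] by (simp add: matrix_of_matrix_vector_mul[unfolded eta_contract_eq])

lemma pd_invertible: assumes "pd A" shows "invertible A"
proof (rule inj_invertible, rule injI)
  fix x y assume "A *v x = A *v y"
  then have "A *v (x - y) = 0" by (simp add: matrix_vector_mult_diff_distrib)
  then have "cinner (x - y) (A *v (x - y)) = 0" by simp
  then show "x = y" using assms unfolding pd_def by (metis less_irrefl eq_iff_diff_eq_0)
qed

lemma inv_unique: fixes A B :: "complex^'n^'n" assumes "A ** B = mat 1" shows "matrix_inv A = B"
proof -
  have BA: "B ** A = mat 1" using assms matrix_left_right_inverse by blast
  then have inv: "invertible A" using assms invertible_def by blast
  have "A ** matrix_inv A = mat 1"
    unfolding matrix_inv_def using someI_ex[of "\<lambda>A'. A ** A' = mat 1 \<and> A' ** A = mat 1"] inv invertible_def by blast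
  then have "B ** (A ** matrix_inv A) = B" by simp
  then show ?thesis by (simp add: matrix_mul_assoc BA)
qed

lemma matrix_inv_right: fixes A :: "complex^'n^'n" assumes "invertible A" shows "A ** matrix_inv A = mat 1"
  unfolding matrix_inv_def using someI_ex[of "\<lambda>A'. A ** A' = mat 1 \<and> A' ** A = mat 1"] assms invertible_def by blast
lemma matrix_inv_left: fixes A :: "complex^'n^'n" assumes "invertible A" shows "matrix_inv A ** A = mat 1"
  unfolding matrix_inv_def using someI_ex[of "\<lambda>A'. A ** A' = mat 1 \<and> A' ** A = mat 1"] assms invertible_def by blast

lemma invertible_mult_D: fixes A B :: "complex^'n^'n" assumes "invertible (A ** B)"
  shows "invertible A" "invertible B"
  using assms by (auto simp: invertible_det_nz det_mul)

lemma invertible_mult_I: fixes A B :: "complex^'n^'n" assumes "invertible A" "invertible B"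
  shows "invertible (A ** B)"
  using assms by (auto simp: invertible_det_nz det_mul)

lemma matrix_inv_mult: fixes A B :: "complex^'n^'n" assumes "invertible A" "invertible B"
  shows "matrix_inv (A ** B) = matrix_inv B ** matrix_inv A"
proof (rule inv_unique)
  have "A ** B ** (matrix_inv B ** matrix_inv A) = A ** (B ** matrix_inv B) ** matrix_inv A"
    by (simp add: matrix_mul_assoc)
  then show "A ** B ** (matrix_inv B ** matrix_inv A) = mat 1"
    using assms by (simp add: matrix_inv_right)
qed

lemma madj_inv: fixes A :: "complex^'n^'n" assumes "invertible A"
  shows "madj (matrix_inv A) = matrix_inv (madj A)"
proof -
  have "madj A ** madj (matrix_inv A) = mat 1"
    using assms by (simp flip: madj_mult add: matrix_inv_left)
  then show ?thesis by (simp add: inv_unique)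
qed

lemma invertible_madj: fixes A :: "complex^'n^'n" assumes "invertible A" shows "invertible (madj A)"
proof -
  obtain A' where "A ** A' = mat 1" "A' ** A = mat 1" using assms invertible_def by blast
  then have "madj A ** madj A' = mat 1" "madj A' ** madj A = mat 1"
    by (simp_all flip: madj_mult)
  then show ?thesis unfolding invertible_def by blast
qed




lemma cinner_bound: "norm (cinner x y) \<le> norm x * norm y"
proof -
  have "norm (cinner x y) \<le> (\<Sum>i\<in>UNIV. norm (cnj (x$i) * y$i))"
    unfolding cinner_def by (rule norm_sum)
  also have "\<dots> = (\<Sum>i\<in>UNIV. \<bar>norm (x$i)\<bar> * \<bar>norm (y$i)\<bar>)"
    by (simp add: norm_mult)
  also have "\<dots> \<le> norm x * norm y"
    unfolding norm_vec_def by (rule L2_set_mult_ineq)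
  finally show ?thesis .
qed

lemma psd_shift:
  assumes herm: "madj H = H"
  shows "\<exists>c::real. 0 \<le> c \<and> psd (H + cmscale (of_real c) (mat 1))"
proof -
  obtain K where K: "\<And>x. norm (H *v x) \<le> norm x * K"
    using bounded_linear.bounded[OF matrix_vector_mul_bounded_linear[of H]] by blast
  define c where "c = \<bar>K\<bar>"
  have "psd (H + cmscale (of_real c) (mat 1))"
    unfolding psd_def
  proof
    fix x
    have eq: "cinner x ((H + cmscale (of_real c) (mat 1)) *v x) = cinner x (H *v x) + of_real (c * (norm x)^2)"
      by (simp add: matrix_vector_mult_add_rdistrib cinner_add_right cmscale_mv cinner_scale_right cinner_self)
    have "norm (cinner x (H *v x)) \<le> norm x * (norm x * K)"
      using cinner_bound[of x "H *v x"] K[of x] by (meson mult_left_mono norm_ge_zero order_trans)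
    moreover have "- Re (cinner x (H *v x)) \<le> norm (cinner x (H *v x))"
      by (metis abs_Re_le_cmod abs_le_D2)
    moreover have "(norm x)^2 * K \<le> (norm x)^2 * c"
      unfolding c_def by (rule mult_left_mono) auto
    moreover have "norm x * (norm x * K) = (norm x)^2 * K" by (simp add: power2_eq_square)
    moreover have "(norm x)^2 * c = c * (norm x)^2" by (rule mult.commute)
    ultimately have "- Re (cinner x (H *v x)) \<le> c * (norm x)^2" by linarith
    then show "0 \<le> cinner x ((H + cmscale (of_real c) (mat 1)) *v x)"
      unfolding eq using hermitian_real[OF herm, of x] by (simp add: complex_nonneg_iff)
  qed
  then show ?thesis unfolding c_def by (intro exI[of _ "\<bar>K\<bar>"]) auto
qed

lemma psd_scaled_id: "0 \<le> c \<Longrightarrow> psd (cmscale (of_real c) (mat 1) :: 'n::finite cmat)"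
  unfolding psd_def by (simp add: cmscale_mv cinner_scale_right cinner_self complex_nonneg_iff)

lemma positive_map_herm:
  assumes lin: "clinear_map \<Phi>" and pos: "positive_map \<Phi>" and herm: "madj H = H"
  shows "madj (\<Phi> H) = \<Phi> H"
proof -
  obtain c where c: "0 \<le> c" "psd (H + cmscale (of_real c) (mat 1))" using psd_shift[OF herm] by blast
  have "\<Phi> H = \<Phi> (H + cmscale (of_real c) (mat 1)) - \<Phi> (cmscale (of_real c) (mat 1))"
    by (simp add: clinear_add[OF lin])
  moreover have "madj (\<Phi> (H + cmscale (of_real c) (mat 1))) = \<Phi> (H + cmscale (of_real c) (mat 1))"
    using pos c unfolding positive_map_def by (intro psd_hermitian) blast
  moreover have "madj (\<Phi> (cmscale (of_real c) (mat 1))) = \<Phi> (cmscale (of_real c) (mat 1))"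
    using pos psd_scaled_id[OF c(1)] unfolding positive_map_def by (intro psd_hermitian) blast
  ultimately show ?thesis by (metis madj_diff)
qed

lemma positive_map_madj:
  assumes lin: "clinear_map \<Phi>" and pos: "positive_map \<Phi>"
  shows "\<Phi> (madj A) = madj (\<Phi> A)"
proof -
  have s1: "cnj (-\<i>/2 * (a - cnj b)) = -\<i>/2 * (b - cnj a)" for a b :: complex
    by (simp add: complex_eq_iff field_simps)
  have s2: "a = 1/2 * (a + cnj b) + \<i> * (-\<i>/2 * (a - cnj b))" for a b :: complex
    by (simp add: complex_eq_iff field_simps)
  have s3: "cnj b = 1/2 * (a + cnj b) + -\<i> * (-\<i>/2 * (a - cnj b))" for a b :: complex
    by (simp add: complex_eq_iff field_simps)
  define H1 where "H1 = cmscale (1/2) (A + madj A)"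
  define H2 where "H2 = cmscale (-\<i>/2) (A - madj A)"
  have h1: "madj H1 = H1" unfolding H1_def by (simp add: madj_def cmscale_def vec_eq_iff)
  have h2: "madj H2 = H2" unfolding H2_def by (simp add: madj_def cmscale_def vec_eq_iff s1 right_diff_distrib)
  have A: "A = H1 + cmscale \<i> H2" unfolding H1_def H2_def
    unfolding vec_eq_iff madj_def cmscale_def by (auto simp: field_simps)
  have Aa: "madj A = H1 + cmscale (-\<i>) H2" unfolding H1_def H2_def
    unfolding vec_eq_iff madj_def cmscale_def by (auto simp: field_simps)
  have "\<Phi> (madj A) = \<Phi> H1 + cmscale (-\<i>) (\<Phi> H2)"
    by (simp add: Aa clinear_add[OF lin] clinear_scale[OF lin])
  also have "\<dots> = madj (\<Phi> H1 + cmscale \<i> (\<Phi> H2))"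
    by (simp add: madj_add madj_cmscale positive_map_herm[OF lin pos h1] positive_map_herm[OF lin pos h2])
  also have "\<dots> = madj (\<Phi> A)"
  proof -
    have "\<Phi> A = \<Phi> (H1 + cmscale \<i> H2)" by (rule arg_cong[where f=\<Phi>, OF A])
    then show ?thesis by (simp add: clinear_add[OF lin] clinear_scale[OF lin])
  qed
  finally show ?thesis .
qed

lemma hs_madj_swap: "hs (madj C) D = hs (madj D) C"
  unfolding hs_def madj_madj by (rule trace_mul_sym)

lemma adjoint_madj:
  assumes lin: "clinear_map \<Phi>" and pos: "positive_map \<Phi>"
  shows "hs_adjoint \<Phi> (madj B) = madj (hs_adjoint \<Phi> B)"
proof (rule hs_ext)
  fix A
  have "hs (madj (hs_adjoint \<Phi> B)) A = hs (madj A) (hs_adjoint \<Phi> B)" by (rule hs_madj_swap)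
  also have "\<dots> = cnj (hs (hs_adjoint \<Phi> B) (madj A))" by (rule hs_cnj)
  also have "\<dots> = cnj (hs B (\<Phi> (madj A)))" by (simp only: hs_adjoint[OF lin])
  also have "\<dots> = cnj (hs B (madj (\<Phi> A)))" by (simp only: positive_map_madj[OF lin pos])
  also have "\<dots> = hs (madj (\<Phi> A)) B" by (rule hs_cnj[symmetric])
  also have "\<dots> = hs (madj B) (\<Phi> A)" by (rule hs_madj_swap)
  also have "\<dots> = hs (hs_adjoint \<Phi> (madj B)) A" by (rule hs_adjoint[OF lin, symmetric])
  finally show "hs (hs_adjoint \<Phi> (madj B)) A = hs (madj (hs_adjoint \<Phi> B)) A" by simp
qed




lemma cont_cinner_left: "continuous_on S (\<lambda>x. cinner v (x::complex^'n))"
  unfolding cinner_def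
  by (intro continuous_at_imp_continuous_on ballI continuous_intros isCont_vec_nth)

lemma cont_quad: "continuous_on S (\<lambda>x. Re (cinner x ((A::'n::finite cmat) *v x)))"
proof -
  have "isCont (\<lambda>x. A *v x) a" for a
    by (rule linear_continuous_at) simp
  then have "isCont (\<lambda>x. (A *v x) $ i) a" for a i by (rule isCont_vec_nth)
  then show ?thesis
  unfolding cinner_def
  by (intro continuous_at_imp_continuous_on ballI continuous_intros isCont_vec_nth) auto
qed

lemma quad_zero: fixes c g :: real assumes "\<And>t. 0 \<le> 2*t*c + t^2*g" shows "c = 0"
proof (rule ccontr)
  assume c: "c \<noteq> 0"
  have g: "0 \<le> g" using assms[of 1] assms[of "-1"] by simp
  define d where "d = g + 1"
  have d: "0 < d" using g d_def by simp
  define t where "t = - c / d"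
  have "d * (d * (2*t*c + t^2*g)) = c^2 * (g - 2*d)"
    unfolding t_def using d by (simp add: field_simps power2_eq_square)
  also have "\<dots> < 0" using c g d_def by (intro mult_pos_neg) auto
  finally have "d * (d * (2*t*c + t^2*g)) < 0" .
  moreover have "0 \<le> d * (d * (2*t*c + t^2*g))" using assms[of t] d by simp
  ultimately show False by simp
qed


lemma mv_scaleR: "(A::complex^'n^'m) *v (r *\<^sub>R x) = r *\<^sub>R (A *v x)"
  by (simp add: vec_eq_iff matrix_vector_mult_def vec_scaleR_c sum_distrib_left mult_ac del: vector_scaleR_component)

definition orthonormal :: "(complex^'n) set \<Rightarrow> bool" where
  "orthonormal V \<longleftrightarrow> (\<forall>v\<in>V. \<forall>w\<in>V. cinner v w = (if v = w then 1 else 0))"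
definition eigen :: "'n::finite cmat \<Rightarrow> (complex^'n) set \<Rightarrow> bool" where
  "eigen A V \<longleftrightarrow> (\<forall>v\<in>V. \<exists>l::real. A *v v = l *\<^sub>R v)"
definition complete :: "(complex^'n::finite) set \<Rightarrow> bool" where
  "complete V \<longleftrightarrow> (\<forall>x. (\<forall>v\<in>V. cinner v x = 0) \<longrightarrow> x = 0)"

lemma orthonormal_bound:
  assumes "orthonormal (V::(complex^'n::finite) set)"
  shows "finite V \<and> card V \<le> DIM(complex^'n)"
proof -
  have "pairwise orthogonal V"
    using assms unfolding orthonormal_def pairwise_def orthogonal_def by (simp add: inner_Re_cinner)
  moreover have "0 \<notin> V" using assms unfolding orthonormal_def by force
  ultimately show ?thesis using pairwise_orthogonal_independent independent_bound by blast
qed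

lemma expansion:
  assumes "orthonormal V" "finite V" "complete V"
  shows "x = (\<Sum>v\<in>V. cinner v x *s v)"
proof -
  have "cinner u (x - (\<Sum>v\<in>V. cinner v x *s v)) = 0" if u: "u \<in> V" for u
  proof -
    have "cinner u (\<Sum>v\<in>V. cinner v x *s v) = (\<Sum>v\<in>V. cinner v x * (if u = v then 1 else 0))"
      using assms(1) u unfolding orthonormal_def by (simp add: cinner_sum_right cinner_scale_right)
    also have "\<dots> = cinner u x" using assms(2) u by (simp add: if_distrib cong: if_cong)
    finally show ?thesis by (simp add: cinner_diff_right)
  qed
  then show ?thesis using assms(3) unfolding complete_def by fastforce
qed

lemma extend_eigen:
  assumes herm: "madj A = A" and on: "orthonormal V" and fin: "finite V" and eig: "eigen A V"
    and nc: "\<not> complete V"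
  shows "\<exists>x0. x0 \<notin> V \<and> orthonormal (insert x0 V) \<and> eigen A (insert x0 V)"
proof -
  define W where "W = {x. \<forall>v\<in>V. cinner v x = 0}"
  obtain w where w: "w \<in> W" "w \<noteq> 0" using nc unfolding complete_def W_def by blast
  define K where "K = W \<inter> sphere 0 1"
  have clW: "closed W"
  proof -
    have "W = (\<Inter>v\<in>V. {x. cinner v x = 0})" unfolding W_def by auto
    moreover have "closed {x. cinner v x = 0}" for v
      by (rule closed_Collect_eq) (auto intro: cont_cinner_left)
    ultimately show ?thesis by auto
  qed
  have W_lin1: "x + y \<in> W" if "x \<in> W" "y \<in> W" for x y
    using that unfolding W_def by (auto simp: cinner_add_right)
  have W_lin2: "r *\<^sub>R x \<in> W" "c *s x \<in> W" if "x \<in> W" for x r c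
    using that unfolding W_def by (auto simp: cinner_scaleR_right cinner_scale_right)
  note W_lin = W_lin1 W_lin2
  have "compact K" unfolding K_def by (intro closed_Int_compact clW compact_sphere)
  moreover have "(1 / norm w) *\<^sub>R w \<in> K" using w W_lin unfolding K_def by auto
  ultimately obtain x0 where x0: "x0 \<in> K" and mx: "\<And>y. y \<in> K \<Longrightarrow> Re (cinner y (A *v y)) \<le> Re (cinner x0 (A *v x0))"
    using continuous_attains_sup[of K "\<lambda>x. Re (cinner x (A *v x))"] cont_quad by blast
  define lam where "lam = Re (cinner x0 (A *v x0))"
  have x0W: "x0 \<in> W" and nx0: "norm x0 = 1" using x0 unfolding K_def by auto
  have bound: "Re (cinner y (A *v y)) \<le> lam * (norm y)^2" if "y \<in> W" for y
  proof (cases "y = 0")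
    case True then show ?thesis by simp
  next
    case False
    define u where "u = (1 / norm y) *\<^sub>R y"
    have "u \<in> K" unfolding K_def u_def using that False W_lin by auto
    then have "Re (cinner u (A *v u)) \<le> lam" using mx unfolding lam_def by blast
    moreover have "Re (cinner u (A *v u)) = Re (cinner y (A *v y)) / (norm y)^2"
      unfolding u_def by (simp add: mv_scaleR cinner_scaleR_left cinner_scaleR_right power2_eq_square)
    ultimately show ?thesis using False by (simp add: field_simps)
  qed
  define B where "B = cmscale (of_real lam) (mat 1) - A"
  have Bv: "B *v y = of_real lam *s y - A *v y" for y
    unfolding B_def by (simp add: matrix_vector_mult_diff_rdistrib cmscale_mv)
  have hermB: "madj B = B" unfolding B_def by (simp add: madj_diff madj_cmscale herm)
  define z where "z = B *v x0"
  have G: "0 \<le> Re (cinner y (B *v y))" if "y \<in> W" for y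
    using bound[OF that] by (simp add: Bv cinner_diff_right cinner_scale_right cinner_self)
  have G0: "Re (cinner x0 (B *v x0)) = 0"
    using nx0 by (simp add: Bv cinner_diff_right cinner_scale_right cinner_self lam_def)
  have orth: "Re (cinner y z) = 0" if "y \<in> W" for y
  proof (rule quad_zero)
    fix t :: real
    have e: "cinner (x0 + t *\<^sub>R y) (B *v (x0 + t *\<^sub>R y)) =
      cinner x0 (B *v x0) + of_real t * (cinner x0 (B *v y) + cinner y (B *v x0)) + of_real (t^2) * cinner y (B *v y)"
      by (simp only: mv_add mv_scaleR cinner_add_left cinner_add_right cinner_scaleR_left cinner_scaleR_right)
         (simp add: algebra_simps power2_eq_square)
    have s: "Re (cinner x0 (B *v y)) = Re (cinner y (B *v x0))"
    proof -
      have "cinner x0 (B *v y) = cinner (B *v x0) y" using cinner_madj[of x0 B y] hermB by simp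
      also have "\<dots> = cnj (cinner y (B *v x0))" by (rule cinner_cnj[symmetric])
      finally show ?thesis by simp
    qed
    have "0 \<le> Re (cinner (x0 + t *\<^sub>R y) (B *v (x0 + t *\<^sub>R y)))"
      by (rule G) (intro W_lin x0W that)
    also have "\<dots> = 2*t*Re (cinner y z) + t^2 * Re (cinner y (B *v y))"
      unfolding e z_def using G0 s by simp
    finally show "0 \<le> 2*t*Re (cinner y z) + t^2 * Re (cinner y (B *v y))" .
  qed
  have zW: "z \<in> W"
    unfolding W_def mem_Collect_eq
  proof (intro ballI)
    fix v assume v: "v \<in> V"
    obtain l where l: "A *v v = l *\<^sub>R v" using eig v unfolding eigen_def by blast
    have "cinner v (A *v x0) = cinner (A *v v) x0" using cinner_madj[of v A x0] herm by simp
    also have "\<dots> = 0" using x0W v unfolding l W_def by (simp add: cinner_scaleR_left)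
    finally have "cinner v (A *v x0) = 0" .
    moreover have "cinner v x0 = 0" using x0W v unfolding W_def by blast
    ultimately show "cinner v z = 0" unfolding z_def
      by (simp add: Bv cinner_diff_right cinner_scale_right)
  qed
  have "cinner z z = 0"
  proof -
    have "Re (cinner z z) = 0" by (rule orth[OF zW])
    moreover have "Re (cinner (\<i> *s z) z) = 0" by (rule orth) (intro W_lin zW)
    ultimately show ?thesis by (simp add: cinner_scale_left complex_eq_iff)
  qed
  then have "z = 0" by simp
  then have eq: "A *v x0 = lam *\<^sub>R x0"
  proof -
    have "of_real lam *s x0 - A *v x0 = 0" using \<open>z = 0\<close> unfolding z_def Bv .
    then have "A *v x0 = of_real lam *s x0" by simp
    also have "\<dots> = lam *\<^sub>R x0" unfolding vec_eq_iff by (simp only: vec_scaleR_c vector_smult_component) simp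
    finally show ?thesis .
  qed
  have x0V: "x0 \<notin> V"
  proof
    assume "x0 \<in> V"
    then have "cinner x0 x0 = 0" using x0W unfolding W_def by blast
    then show False using nx0 by simp
  qed
  have "orthonormal (insert x0 V)"
    unfolding orthonormal_def
  proof (intro ballI)
    fix v w assume "v \<in> insert x0 V" "w \<in> insert x0 V"
    moreover have "cinner x0 x0 = 1" using nx0 by (simp add: cinner_self)
    moreover have "cinner v x0 = 0" "cinner x0 v = 0" if "v \<in> V" for v
    proof -
      show v0: "cinner v x0 = 0" using x0W that unfolding W_def by blast
      have "cinner x0 v = cnj (cinner v x0)" by (rule cinner_cnj[symmetric])
      then show "cinner x0 v = 0" using v0 by simp
    qed
    ultimately show "cinner v w = (if v = w then 1 else 0)"
      using on x0V unfolding orthonormal_def by auto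
  qed
  moreover have "eigen A (insert x0 V)" using eig eq unfolding eigen_def by auto
  ultimately show ?thesis using x0V by blast
qed




lemma spectral:
  fixes A :: "'n::finite cmat"
  assumes herm: "madj A = A"
  shows "\<exists>V. finite V \<and> orthonormal V \<and> eigen A V \<and> complete V"
proof (rule ccontr)
  assume no: "\<not> ?thesis"
  have "\<exists>V. orthonormal V \<and> finite V \<and> eigen A V \<and> card V = n" for n
  proof (induction n)
    case 0
    have "orthonormal {}" "eigen A {}" by (auto simp: orthonormal_def eigen_def)
    then show ?case by (intro exI[of _ "{}"]) auto
  next
    case (Suc n)
    then obtain V where V: "orthonormal V" "finite V" "eigen A V" "card V = n" by blast
    then have "\<not> complete V" using no by blast
    then obtain x0 where "x0 \<notin> V" "orthonormal (insert x0 V)" "eigen A (insert x0 V)"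
      using extend_eigen[OF herm V(1,2,3)] by blast
    then show ?case using V by (intro exI[of _ "insert x0 V"]) auto
  qed
  note this[of "Suc DIM(complex^'n)"]
  then obtain V :: "(complex^'n) set" where "orthonormal V" "card V = Suc DIM(complex^'n)" by blast
  then show False using orthonormal_bound[of V] by simp
qed

definition opm :: "(complex^'n::finite) set \<Rightarrow> (complex^'n \<Rightarrow> complex) \<Rightarrow> 'n cmat" where
  "opm V c = (\<chi> i j. \<Sum>v\<in>V. c v * v$i * cnj (v$j))"

lemma opm_mv: "opm V c *v x = (\<Sum>v\<in>V. (c v * cinner v x) *s v)"
  unfolding vec_eq_iff
proof
  fix i
  have "(opm V c *v x) $ i = (\<Sum>j\<in>UNIV. \<Sum>v\<in>V. c v * v$i * cnj (v$j) * x$j)"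
    unfolding opm_def matrix_vector_mult_def by (simp add: sum_distrib_right)
  also have "\<dots> = (\<Sum>v\<in>V. \<Sum>j\<in>UNIV. c v * v$i * cnj (v$j) * x$j)" by (rule sum.swap)
  also have "\<dots> = (\<Sum>v\<in>V. (c v * cinner v x) * v$i)"
    unfolding cinner_def by (simp add: sum_distrib_left sum_distrib_right mult_ac)
  finally show "(opm V c *v x) $ i = (\<Sum>v\<in>V. (c v * cinner v x) *s v) $ i"
    by (simp add: sum_component)
qed

lemma opm_on: assumes "orthonormal V" "finite V" "w \<in> V"
  shows "opm V c *v w = c w *s w"
proof -
  have "opm V c *v w = (\<Sum>v\<in>V. (if v = w then c v *s v else 0))"
    unfolding opm_mv using assms(1,3) unfolding orthonormal_def by (intro sum.cong) auto
  then show ?thesis using assms(2,3) by simp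
qed

lemma opm_comp: assumes "orthonormal V" "finite V"
  shows "opm V c *v (opm V d *v x) = opm V (\<lambda>v. c v * d v) *v x"
proof -
  have "opm V c *v (opm V d *v x) = (\<Sum>w\<in>V. (d w * cinner w x) *s (opm V c *v w))"
    by (simp add: opm_mv[of V d] mv_sum mv_scale)
  also have "\<dots> = (\<Sum>w\<in>V. (c w * d w * cinner w x) *s w)"
    using assms by (intro sum.cong) (auto simp: opm_on vec_eq_iff mult_ac)
  also have "\<dots> = opm V (\<lambda>v. c v * d v) *v x" by (simp add: opm_mv)
  finally show ?thesis .
qed

lemma opm_quad: "cinner x (opm V c *v x) = (\<Sum>v\<in>V. c v * of_real ((norm (cinner v x))^2))"
proof -
  have "cinner x (opm V c *v x) = (\<Sum>v\<in>V. c v * cinner v x * cinner x v)"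
    by (simp add: opm_mv cinner_sum_right cinner_scale_right)
  also have "\<dots> = (\<Sum>v\<in>V. c v * of_real ((norm (cinner v x))^2))"
  proof (rule sum.cong)
    fix v
    have 1: "cinner x v = cnj (cinner v x)" by (rule cinner_cnj[symmetric])
    have 2: "cinner v x * cnj (cinner v x) = of_real ((norm (cinner v x))^2)" by (metis cnj_mult_self mult.commute)
    show "c v * cinner v x * cinner x v = c v * of_real ((norm (cinner v x))^2)"
      unfolding 1 by (metis 2 mult.assoc)
  qed simp
  finally show ?thesis .
qed

lemma eigen_expand:
  assumes "orthonormal V" "finite V" "complete V" and lam: "\<And>v. v \<in> V \<Longrightarrow> A *v v = lam v *\<^sub>R v"
  shows "A *v x = opm V (\<lambda>v. of_real (lam v)) *v x"
proof -
  have "A *v x = A *v (\<Sum>v\<in>V. cinner v x *s v)" using expansion[OF assms(1-3)] by metis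
  also have "\<dots> = (\<Sum>v\<in>V. cinner v x *s (lam v *\<^sub>R v))" by (simp add: mv_sum mv_scale lam)
  also have "\<dots> = opm V (\<lambda>v. of_real (lam v)) *v x"
    unfolding opm_mv by (intro sum.cong) (auto simp: vec_eq_iff vec_scaleR_c mult_ac simp del: vector_scaleR_component)
  finally show ?thesis .
qed


lemma cinner_neg_right: "cinner x (- y) = - cinner x y"
  by (simp add: cinner_def sum_negf)

lemma psd_sqrt_ex1:
  fixes A :: "'n::finite cmat"
  assumes psdA: "psd A"
  shows "\<exists>!B. psd B \<and> B ** B = A"
proof -
  have herm: "madj A = A" by (rule psd_hermitian[OF psdA])
  obtain V where V: "finite V" "orthonormal V" "eigen A V" "complete V" using spectral[OF herm] by blast
  define lam where "lam v = (SOME l. A *v v = l *\<^sub>R v)" for v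
  have lam: "A *v v = lam v *\<^sub>R v" if "v \<in> V" for v
    using V(3) that unfolding eigen_def lam_def by (metis (mono_tags, lifting) someI_ex)
  have lam0: "0 \<le> lam v" if "v \<in> V" for v
  proof -
    have "cinner v (A *v v) = of_real (lam v)"
      using V(2) that unfolding orthonormal_def by (simp add: lam cinner_scaleR_right)
    then show ?thesis using psdA unfolding psd_def by (metis Re_complex_of_real complex_nonneg_iff)
  qed
  define s :: "complex^'n \<Rightarrow> complex" where "s v = of_real (sqrt (lam v))" for v
  define B where "B = opm V s"
  have AB: "A *v x = opm V (\<lambda>v. of_real (lam v)) *v x" for x
    by (rule eigen_expand[OF V(2,1,4) lam])
  have BB: "B ** B = A"
  proof -
    have "(B ** B) *v x = A *v x" for x
    proof -
      have "(B ** B) *v x = opm V (\<lambda>v. s v * s v) *v x"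
        unfolding B_def by (simp flip: matrix_vector_mul_assoc add: opm_comp[OF V(2,1)])
      also have "opm V (\<lambda>v. s v * s v) = opm V (\<lambda>v. of_real (lam v))"
        unfolding opm_def s_def using lam0 by (intro arg_cong[where f=vec_lambda] ext sum.cong refl)
           (simp flip: of_real_mult)
      finally show ?thesis using AB by simp
    qed
    then show ?thesis by (simp add: matrix_eq)
  qed
  have psdB: "psd B"
    unfolding psd_def B_def opm_quad s_def
    by (intro allI sum_nonneg) (simp add: complex_nonneg_iff lam0)
  have uniq: "C = B" if Cps: "psd C" "C ** C = A" for C
  proof -
    have hC: "madj C = C" by (rule psd_hermitian[OF Cps(1)])
    have Cv: "C *v v = s v *s v" if v: "v \<in> V" for v
    proof -
      define u where "u = C *v v - s v *s v"
      have ss: "s v * s v = of_real (lam v)" unfolding s_def using lam0[OF v] by (simp flip: of_real_mult)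
      have "C *v (C *v v) = A *v v" using \<open>C ** C = A\<close> by (simp add: matrix_vector_mul_assoc)
      then have CCv: "C *v (C *v v) = (s v * s v) *s v" using lam[OF v] ss
        by (simp add: vec_eq_iff vec_scaleR_c del: vector_scaleR_component)
      have Cu: "C *v u = - (s v *s u)"
        unfolding u_def using CCv by (simp add: matrix_vector_mult_diff_distrib mv_scale vec_eq_iff algebra_simps)
      have q: "cinner u (C *v u) = - (s v * of_real ((norm u)^2))"
        unfolding Cu by (simp add: cinner_neg_right cinner_scale_right cinner_self)
      have "0 \<le> cinner u (C *v u)" using Cps(1) unfolding psd_def by blast
      then have "sqrt (lam v) * (norm u)^2 \<le> 0" unfolding q s_def by (simp add: complex_nonneg_iff)
      moreover have "0 \<le> sqrt (lam v) * (norm u)^2" using lam0[OF v] by simp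
      ultimately have "sqrt (lam v) = 0 \<or> norm u = 0" by simp
      then have "u = 0"
      proof
        assume s0: "sqrt (lam v) = 0"
        then have "C *v u = 0" using Cu unfolding s_def by simp
        moreover have u': "u = C *v v" unfolding u_def s_def using s0 by simp
        ultimately have "cinner v (C *v u) = 0" by simp
        moreover have "cinner v (C *v u) = cinner u u"
          using cinner_madj[of v C u] hC u' by simp
        ultimately show "u = 0" by simp
      qed simp
      then show ?thesis unfolding u_def by simp
    qed
    have "C *v x = B *v x" for x
    proof -
      have "C *v x = C *v (\<Sum>v\<in>V. cinner v x *s v)" using expansion[OF V(2,1,4)] by metis
      also have "\<dots> = (\<Sum>v\<in>V. (s v * cinner v x) *s v)"
        by (simp add: mv_sum mv_scale Cv vec_eq_iff mult_ac cong: sum.cong)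
      also have "\<dots> = B *v x" unfolding B_def opm_mv ..
      finally show ?thesis .
    qed
    then show ?thesis by (simp add: matrix_eq)
  qed
  show ?thesis using psdB BB uniq by blast
qed

lemma msqrt:
  assumes "psd A"
  shows "psd (msqrt A)" "msqrt A ** msqrt A = A"
  using theI'[OF psd_sqrt_ex1[OF assms]] unfolding msqrt_def by auto




lemma mm_diff_left: "(A::complex^'n^'m) ** (B - C) = A ** B - A ** C"
  by (simp add: matrix_matrix_mult_def vec_eq_iff sum_subtractf right_diff_distrib)
lemma mm_add_right: "((A::complex^'n^'m) + B) ** C = A ** C + B ** C"
  by (simp add: matrix_matrix_mult_def vec_eq_iff sum.distrib distrib_right)
lemma cmscale_mm_left: "cmscale c A ** B = cmscale c (A ** B)"
  by (simp add: matrix_matrix_mult_def cmscale_def vec_eq_iff sum_distrib_left mult_ac)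

lemma diag_cinner: "(M::'n::finite cmat) $ i $ i = cinner (axis i 1) (M *v axis i 1)"
proof -
  have "(M *v axis i 1) $ i = (\<Sum>j\<in>UNIV. M$i$j * (if j = i then 1 else 0))"
    by (simp add: matrix_vector_mult_def axis_def)
  also have "\<dots> = (\<Sum>j\<in>UNIV. if j = i then M$i$j else 0)" by (rule sum.cong) auto
  also have "\<dots> = M$i$i" by simp
  finally have "(M *v axis i 1) $ i = M $ i $ i" .
  then show ?thesis by (simp add: cinner_axis)
qed

lemma trace_psd:
  fixes Y D :: "'n::finite cmat"
  assumes "psd Y" "psd D"
  shows "0 \<le> trace (Y ** D)"
proof -
  define B where "B = msqrt Y"
  have B: "psd B" "B ** B = Y" using msqrt[OF assms(1)] unfolding B_def by auto
  have hB: "madj B = B" by (rule psd_hermitian[OF B(1)])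
  have "trace (Y ** D) = trace (B ** (B ** D))" using B(2) by (simp add: matrix_mul_assoc)
  also have "\<dots> = trace (B ** D ** B)" by (rule trace_mul_sym)
  also have "\<dots> = (\<Sum>i\<in>UNIV. cinner (B *v axis i 1) (D *v (B *v axis i 1)))"
    unfolding trace_def
  proof (rule sum.cong)
    fix i
    have "(B ** D ** B) $ i $ i = cinner (axis i 1) (B *v (D *v (B *v axis i 1)))"
      by (simp add: diag_cinner matrix_vector_mul_assoc matrix_mul_assoc)
    also have "\<dots> = cinner (B *v axis i 1) (D *v (B *v axis i 1))"
      using cinner_madj[of "axis i 1" B] hB by simp
    finally show "(B ** D ** B) $ i $ i = cinner (B *v axis i 1) (D *v (B *v axis i 1))" .
  qed simp
  also have "0 \<le> \<dots>" using assms(2) unfolding psd_def by (intro sum_nonneg) blast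
  finally show ?thesis by simp
qed

lemma pd_conj:
  fixes P \<omega> :: "'n::finite cmat"
  assumes "pd \<omega>" "madj P = P" "invertible P"
  shows "pd (P ** \<omega> ** P)"
  unfolding pd_def
proof (intro allI impI)
  fix x :: "complex^'n" assume x: "x \<noteq> 0"
  have "P *v x \<noteq> 0"
  proof
    assume "P *v x = 0"
    then have "matrix_inv P *v (P *v x) = 0" by simp
    then show False using x matrix_inv_left[OF assms(3)] by (simp add: matrix_vector_mul_assoc)
  qed
  then have "0 < cinner (P *v x) (\<omega> *v (P *v x))" using assms(1) unfolding pd_def by blast
  also have "cinner (P *v x) (\<omega> *v (P *v x)) = cinner x ((P ** \<omega> ** P) *v x)"
    using cinner_madj[of x P "\<omega> *v (P *v x)"] assms(2) by (simp add: matrix_vector_mul_assoc matrix_mul_assoc)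
  finally show "0 < cinner x ((P ** \<omega> ** P) *v x)" .
qed


theorem mainTheorem1:
  fixes \<Phi> :: "('a::finite) cmat \<Rightarrow> ('b::finite) cmat"
    and X Y :: "'a cmat" and \<omega> :: "'b cmat"
  assumes lin: "clinear_map \<Phi>"
    and pos: "positive_map \<Phi>"
    and tp: "trace_preserving \<Phi>"
    and schwarz: "\<And>\<rho> \<sigma>. pd \<sigma> \<Longrightarrow> invertible (hs_adjoint \<Phi> \<sigma>) \<Longrightarrow>
        loewner_le (hs_adjoint \<Phi> (madj \<rho>) ** matrix_inv (hs_adjoint \<Phi> \<sigma>) ** hs_adjoint \<Phi> \<rho>)
                   (hs_adjoint \<Phi> (madj \<rho> ** matrix_inv \<sigma> ** \<rho>))"
    and X: "pd X" and XPhi: "invertible (\<Phi> X)"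
    and om: "pd \<omega>"
    and tau_inv: "invertible (msqrt X ** hs_adjoint \<Phi> (minvsqrt (\<Phi> X) ** \<omega> ** minvsqrt (\<Phi> X)) ** msqrt X)"
    and Y: "psd Y"
  shows "let \<tau> = msqrt X ** hs_adjoint \<Phi> (minvsqrt (\<Phi> X) ** \<omega> ** minvsqrt (\<Phi> X)) ** msqrt X;
             V = (\<lambda>\<rho>. hs_adjoint \<Phi> (\<rho> ** minvsqrt (\<Phi> X)) ** msqrt X)
         in op_le (hs_adjoint V \<circ> rel_modular Y \<tau> \<circ> V) (rel_modular (\<Phi> Y) \<omega>)"
proof -
  define \<Psi> where "\<Psi> = hs_adjoint \<Phi>"
  have linP: "clinear_map \<Psi>" unfolding \<Psi>_def by (rule hs_adjoint_linear[OF lin])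
  have adjP: "hs (\<Psi> B) A = hs B (\<Phi> A)" for A B unfolding \<Psi>_def by (rule hs_adjoint[OF lin])
  have madjP: "\<Psi> (madj B) = madj (\<Psi> B)" for B unfolding \<Psi>_def by (rule adjoint_madj[OF lin pos])
  have psdPX: "psd (\<Phi> X)" using pos pd_psd[OF X] unfolding positive_map_def by blast
  define R where "R = msqrt (\<Phi> X)"
  have R: "psd R" "R ** R = \<Phi> X" using msqrt[OF psdPX] unfolding R_def by auto
  have hR: "madj R = R" by (rule psd_hermitian[OF R(1)])
  have invR: "invertible R" using invertible_mult_D(1)[of R R] R(2) XPhi by simp
  define P where "P = minvsqrt (\<Phi> X)"
  have PR: "P = matrix_inv R" unfolding P_def minvsqrt_def R_def ..
  have RP: "R ** P = mat 1" "P ** R = mat 1" unfolding PR using invR by (auto simp: matrix_inv_right matrix_inv_left)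
  have invP: "invertible P" using RP invertible_def by blast
  have hP: "madj P = P" unfolding PR using madj_inv[OF invR] hR by simp
  have iP: "matrix_inv P = R" by (rule inv_unique[OF RP(2)])
  define S where "S = msqrt X"
  have S: "psd S" "S ** S = X" using msqrt[OF pd_psd[OF X]] unfolding S_def by auto
  have hS: "madj S = S" by (rule psd_hermitian[OF S(1)])
  define \<sigma> where "\<sigma> = P ** \<omega> ** P"
  have pds: "pd \<sigma>" unfolding \<sigma>_def by (rule pd_conj[OF om hP invP])
  define G where "G = \<Psi> \<sigma>"
  define \<tau> where "\<tau> = S ** G ** S"
  have tau_eq: "msqrt X ** hs_adjoint \<Phi> (minvsqrt (\<Phi> X) ** \<omega> ** minvsqrt (\<Phi> X)) ** msqrt X = \<tau>"
    unfolding \<tau>_def S_def G_def \<Psi>_def \<sigma>_def P_def ..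
  have invt: "invertible \<tau>" using tau_inv tau_eq by simp
  have invSG: "invertible (S ** G)" "invertible S" using invertible_mult_D[of "S ** G" S] invt unfolding \<tau>_def by auto
  have invG: "invertible G" using invertible_mult_D(2)[OF invSG(1)] .
  have invom: "invertible \<omega>" by (rule pd_invertible[OF om])
  have STS: "S ** matrix_inv \<tau> ** S = matrix_inv G"
  proof -
    have "matrix_inv \<tau> = matrix_inv S ** matrix_inv G ** matrix_inv S"
      unfolding \<tau>_def using invSG invG by (simp add: matrix_inv_mult matrix_mul_assoc)
    then have "S ** matrix_inv \<tau> ** S = (S ** matrix_inv S) ** matrix_inv G ** (matrix_inv S ** S)"
      by (simp add: matrix_mul_assoc)
    also have "\<dots> = matrix_inv G" using invSG(2) by (simp add: matrix_inv_right matrix_inv_left)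
    finally show ?thesis .
  qed
  have PsP: "P ** matrix_inv \<sigma> ** P = matrix_inv \<omega>"
  proof -
    have "matrix_inv \<sigma> = R ** matrix_inv \<omega> ** R"
      unfolding \<sigma>_def using invP invom by (simp add: matrix_inv_mult invertible_mult_I iP matrix_mul_assoc)
    then have "P ** matrix_inv \<sigma> ** P = (P ** R) ** matrix_inv \<omega> ** (R ** P)"
      by (simp add: matrix_mul_assoc)
    also have "\<dots> = matrix_inv \<omega>" using RP by simp
    finally show ?thesis .
  qed
  define V where "V = (\<lambda>\<rho>. \<Psi> (\<rho> ** P) ** S)"
  have linV: "clinear_map V"
    unfolding clinear_map_def V_def
    by (simp add: mm_add_right cmscale_mm_left clinear_add[OF linP] clinear_scale[OF linP])
  have adjV: "hs (hs_adjoint V B) A = hs B (V A)" for A B by (rule hs_adjoint[OF linV])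
  have "op_le (hs_adjoint V \<circ> rel_modular Y \<tau> \<circ> V) (rel_modular (\<Phi> Y) \<omega>)"
    unfolding op_le_def
  proof
    fix Z :: "'b cmat"
    define W where "W = V Z"
    define M where "M = Z ** matrix_inv \<omega> ** madj Z"
    define L where "L = \<Psi> (Z ** P) ** matrix_inv G ** \<Psi> (P ** madj Z)"
    have e1: "hs Z (hs_adjoint V (rel_modular Y \<tau> W)) = hs W (rel_modular Y \<tau> W)"
    proof -
      have "hs Z (hs_adjoint V (rel_modular Y \<tau> W)) = cnj (hs (hs_adjoint V (rel_modular Y \<tau> W)) Z)"
        by (rule hs_cnj)
      also have "\<dots> = cnj (hs (rel_modular Y \<tau> W) (V Z))" by (simp only: adjV)
      also have "\<dots> = hs W (rel_modular Y \<tau> W)" unfolding W_def by (rule hs_cnj[symmetric])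
      finally show ?thesis .
    qed
    have e2: "hs W (rel_modular Y \<tau> W) = trace (Y ** L)"
    proof -
      have mW: "madj W = S ** \<Psi> (P ** madj Z)"
        unfolding W_def V_def by (simp add: madj_mult hS hP flip: madjP)
      have "hs W (rel_modular Y \<tau> W) = trace (madj W ** (Y ** W ** matrix_inv \<tau>))"
        unfolding hs_def rel_modular_def ..
      also have "\<dots> = trace (Y ** W ** matrix_inv \<tau> ** madj W)"
        by (subst trace_mul_sym) (simp add: matrix_mul_assoc)
      also have "Y ** W ** matrix_inv \<tau> ** madj W = Y ** \<Psi> (Z ** P) ** (S ** matrix_inv \<tau> ** S) ** \<Psi> (P ** madj Z)"
        unfolding mW unfolding W_def V_def by (simp add: matrix_mul_assoc)
      also have "\<dots> = Y ** L" unfolding STS L_def by (simp add: matrix_mul_assoc)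
      finally show ?thesis .
    qed
    have e3: "hs Z (rel_modular (\<Phi> Y) \<omega> Z) = trace (Y ** \<Psi> M)"
    proof -
      have "hs Z (rel_modular (\<Phi> Y) \<omega> Z) = trace (madj Z ** (\<Phi> Y ** Z ** matrix_inv \<omega>))"
        unfolding hs_def rel_modular_def ..
      also have "\<dots> = trace (\<Phi> Y ** Z ** matrix_inv \<omega> ** madj Z)"
        by (subst trace_mul_sym) (simp add: matrix_mul_assoc)
      also have "\<dots> = trace (\<Phi> Y ** M)" unfolding M_def by (simp add: matrix_mul_assoc)
      also have "\<dots> = trace (M ** \<Phi> Y)" by (rule trace_mul_sym)
      also have "\<dots> = hs (madj M) (\<Phi> Y)" unfolding hs_def by simp
      also have "\<dots> = hs (\<Psi> (madj M)) Y" by (rule adjP[symmetric])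
      also have "\<dots> = trace (\<Psi> M ** Y)" unfolding hs_def madjP by simp
      also have "\<dots> = trace (Y ** \<Psi> M)" by (rule trace_mul_sym)
      finally show ?thesis .
    qed
    have D: "psd (\<Psi> M - L)"
    proof -
      have invG': "invertible (hs_adjoint \<Phi> \<sigma>)" using invG unfolding G_def \<Psi>_def .
      have "loewner_le (hs_adjoint \<Phi> (madj (P ** madj Z)) ** matrix_inv (hs_adjoint \<Phi> \<sigma>) ** hs_adjoint \<Phi> (P ** madj Z))
                   (hs_adjoint \<Phi> (madj (P ** madj Z) ** matrix_inv \<sigma> ** (P ** madj Z)))"
        by (rule schwarz[OF pds invG'])
      moreover have "madj (P ** madj Z) = Z ** P" by (simp add: madj_mult hP)
      moreover have "Z ** P ** matrix_inv \<sigma> ** (P ** madj Z) = M"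
      proof -
        have "Z ** P ** matrix_inv \<sigma> ** (P ** madj Z) = Z ** (P ** matrix_inv \<sigma> ** P) ** madj Z"
          by (simp add: matrix_mul_assoc)
        then show ?thesis unfolding PsP M_def .
      qed
      ultimately show ?thesis unfolding loewner_le_def L_def G_def \<Psi>_def by simp
    qed
    have "hs Z (rel_modular (\<Phi> Y) \<omega> Z - (hs_adjoint V \<circ> rel_modular Y \<tau> \<circ> V) Z)
        = trace (Y ** (\<Psi> M - L))"
      using e1 e2 e3 by (simp add: hs_diff_right W_def mm_diff_left trace_sub)
    also have "0 \<le> \<dots>" by (rule trace_psd[OF Y D])
    finally show "0 \<le> hs Z (rel_modular (\<Phi> Y) \<omega> Z - (hs_adjoint V \<circ> rel_modular Y \<tau> \<circ> V) Z)" .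
  qed
  then show ?thesis unfolding Let_def tau_eq V_def \<Psi>_def P_def S_def .
qed


end
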